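(* Let $l=m_5(e_3+e_4+e_5)+m_6e_6+m_7e_7+m_8e_8$ with $m_5,\dots,m_8\in\mathbb Z$ and $m_5+m_6+m_7+m_8$ even (these are exactly the vectors of $E_8$ orthogonal to $L_2=\langle e_2+e_1,e_2-e_1,e_4-e_3,e_5-e_4\rangle_\mathbb Z\cong 2A_1\oplus A_2$). Then $l$ is orthogonal to exactly $10$ roots of $E_8$ if and only if (i) $m_j\ne0$ for every $j\in\{5,6,7,8\}$ and $m_i\ne\pm m_j$ for all $5\le i<j\le8$, and (ii) $km_5\ne\pm m_6\pm m_7\pm m_8$ for $k\in\{1,3\}$ and every choice of signs. Moreover, $l$ is orthogonal to exactly $14$ roots of $E_8$ if (i) holds, (ii) holds for $k=1$, and there is exactly one relation of the form $3m_5=\pm m_6\pm m_7\pm m_8$ (exactly one choice of signs).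
   Context: $e_1,\dots,e_8$ is an orthonormal basis of $\mathbb R^8$ and $E_8=\{x\in\mathbb Z^8\cup(\mathbb Z+\tfrac12)^8\mid \sum_i x_i\in2\mathbb Z\}$; its roots (vectors of square $2$) are the $112$ vectors $\pm e_i\pm e_j$ ($i<j$) and the $128$ vectors $\frac12\sum_{i=1}^8(-1)^{\nu_i}e_i$ with $\sum\nu_i$ even. *)

theory Defs
  imports Main "HOL-Library.FuncSet" Complex_Main
begin

text \<open>Vectors of R^8 are represented as functions nat => real supported on the
index set {1..8}; the coordinate x i is the coefficient of e_i.\<close>

definition e8_lattice :: "(nat \<Rightarrow> real) set" where
  "e8_lattice = {x. (\<forall>i. i \<notin> {1..8} \<longrightarrow> x i = 0) \<and>
      ((\<forall>i\<in>{1..8}. x i \<in> \<int>) \<or> (\<forall>i\<in>{1..8}. x i - 1/2 \<in> \<int>)) \<and>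
      (\<exists>k::int. (\<Sum>i=1..8. x i) = 2 * of_int k)}"

definition inner8 :: "(nat \<Rightarrow> real) \<Rightarrow> (nat \<Rightarrow> real) \<Rightarrow> real" where
  "inner8 x y = (\<Sum>i=1..8. x i * y i)"

definition e8_roots :: "(nat \<Rightarrow> real) set" where
  "e8_roots = {x \<in> e8_lattice. inner8 x x = 2}"

definition num_orth_roots :: "(nat \<Rightarrow> real) \<Rightarrow> nat" where
  "num_orth_roots l = card {r \<in> e8_roots. inner8 l r = 0}"

definition lvec :: "int \<Rightarrow> int \<Rightarrow> int \<Rightarrow> int \<Rightarrow> nat \<Rightarrow> real" where
  "lvec m5 m6 m7 m8 = (\<lambda>i. if i \<in> {3,4,5} then of_int m5 else if i = 6 then of_int m6
      else if i = 7 then of_int m7 else if i = 8 then of_int m8 else 0)"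

end

theory Submission
  imports Defs
begin

definition iv :: "nat \<Rightarrow> nat \<Rightarrow> int \<Rightarrow> int \<Rightarrow> nat \<Rightarrow> real" where
  "iv i j a b = (\<lambda>k. if k = i then of_int a else if k = j then of_int b else 0)"

definition hv :: "int \<Rightarrow> int \<Rightarrow> int \<Rightarrow> int \<Rightarrow> int \<Rightarrow> int \<Rightarrow> int \<Rightarrow> int \<Rightarrow> nat \<Rightarrow> real" where
  "hv e1 e2 e3 e4 e5 e6 e7 e8 = (\<lambda>k. if k = 1 then of_int e1 / 2 else if k = 2 then of_int e2 / 2
     else if k = 3 then of_int e3 / 2 else if k = 4 then of_int e4 / 2
     else if k = 5 then of_int e5 / 2 else if k = 6 then of_int e6 / 2
     else if k = 7 then of_int e7 / 2 else if k = 8 then of_int e8 / 2 else 0)"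

lemma set18: "{1..8::nat} = {1,2,3,4,5,6,7,8}" by auto

lemma sum8: "(\<Sum>i=1..8. (f::nat\<Rightarrow>real) i) = f 1 + f 2 + f 3 + f 4 + f 5 + f 6 + f 7 + (f 8 :: real)"
  unfolding set18 by (simp add: algebra_simps)

lemma iv_split: "i \<noteq> j \<Longrightarrow> iv i j a b k = (if k = i then of_int a else 0) + (if k = j then of_int b else 0)"
  by (auto simp: iv_def)

lemma sum_iv: assumes "i \<noteq> j" "i \<in> {1..8}" "j \<in> {1..8}"
  shows "(\<Sum>k=1..8. f k * iv i j a b k) = f i * of_int a + f j * of_int b"
proof -
  have "(\<Sum>k=1..8. f k * iv i j a b k) = (\<Sum>k=1..8. (if k = i then f k * of_int a else 0) + (if k = j then f k * of_int b else 0))"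
    by (rule sum.cong) (auto simp: iv_split[OF assms(1)] algebra_simps)
  also have "\<dots> = f i * of_int a + f j * of_int b"
    using assms by (simp add: sum.distrib)
  finally show ?thesis .
qed

lemma iv_root: assumes "i \<noteq> j" "i \<in> {1..8}" "j \<in> {1..8}" "a \<in> {-1,1}" "b \<in> {-1,1}"
  shows "iv i j a b \<in> e8_roots"
proof -
  have s1: "(\<Sum>k=1..8. iv i j a b k) = of_int a + of_int b"
    using sum_iv[OF assms(1-3), of "\<lambda>_. 1"] by simp
  have s2: "inner8 (iv i j a b) (iv i j a b) = of_int a * of_int a + of_int b * of_int b"
    unfolding inner8_def using sum_iv[OF assms(1-3), of "iv i j a b" a b] assms(1)
    by (simp add: iv_def)
  have ev: "\<exists>k::int. (\<Sum>k=1..8. iv i j a b k) = 2 * of_int k"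
  proof -
    have "a + b = 2 * ((a+b) div 2)" using assms(4,5) by auto
    then have "(of_int a + of_int b :: real) = 2 * of_int ((a+b) div 2)"
      by (metis of_int_add of_int_mult of_int_numeral)
    then show ?thesis unfolding s1 by blast
  qed
  have "iv i j a b \<in> e8_lattice"
    unfolding e8_lattice_def using assms ev by (auto simp: iv_def)
  then show ?thesis unfolding e8_roots_def using s2 assms(4,5) by auto
qed

lemma parity:
  fixes e1 e2 e3 e4 e5 e6 e7 e8 :: int
  assumes "e1 \<in> {-1,1}" "e2 \<in> {-1,1}" "e3 \<in> {-1,1}" "e4 \<in> {-1,1}"
          "e5 \<in> {-1,1}" "e6 \<in> {-1,1}" "e7 \<in> {-1,1}" "e8 \<in> {-1,1}"
  shows "(e1*e2*e3*e4*e5*e6*e7*e8 = 1) \<longleftrightarrow> (4 dvd (e1+e2+e3+e4+e5+e6+e7+e8))"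
  using assms by auto

lemma sq1: "(e::int) \<in> {-1,1} \<Longrightarrow> of_int e * of_int e = (1::real)"
  by auto

lemma hv_root:
  fixes e1 e2 e3 e4 e5 e6 e7 e8 :: int
  assumes "e1 \<in> {-1,1}" "e2 \<in> {-1,1}" "e3 \<in> {-1,1}" "e4 \<in> {-1,1}"
          "e5 \<in> {-1,1}" "e6 \<in> {-1,1}" "e7 \<in> {-1,1}" "e8 \<in> {-1,1}"
    and p: "e1*e2*e3*e4*e5*e6*e7*e8 = 1"
  shows "hv e1 e2 e3 e4 e5 e6 e7 e8 \<in> e8_roots"
proof -
  let ?h = "hv e1 e2 e3 e4 e5 e6 e7 e8"
  obtain k where k: "e1+e2+e3+e4+e5+e6+e7+e8 = 4 * k"
  proof -
    have "4 dvd (e1+e2+e3+e4+e5+e6+e7+e8)" using parity[OF assms(1-8)] p by blast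
    then show ?thesis using that by (elim dvdE) blast
  qed
  have s1: "(\<Sum>i=1..8. ?h i) = 2 * of_int k"
  proof -
    have "(\<Sum>i=1..8. ?h i) = of_int (e1+e2+e3+e4+e5+e6+e7+e8) / 2"
      unfolding sum8 by (simp add: hv_def add_divide_distrib)
    also have "\<dots> = 2 * of_int k" by (simp add: k)
    finally show ?thesis .
  qed
  have half: "\<And>e::int. e \<in> {-1,1} \<Longrightarrow> of_int e / 2 - 1/2 \<in> (\<int>::real set)"
  proof -
    fix e :: int assume "e \<in> {-1,1}"
    then have "of_int e / 2 - 1/2 = (of_int (if e = 1 then 0 else -1) :: real)" by auto
    then show "of_int e / 2 - 1/2 \<in> (\<int>::real set)" by simp
  qed
  have "?h \<in> e8_lattice"
    unfolding e8_lattice_def using s1 half[OF assms(1)] half[OF assms(2)] half[OF assms(3)]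
      half[OF assms(4)] half[OF assms(5)] half[OF assms(6)] half[OF assms(7)] half[OF assms(8)]
    by (auto simp: hv_def set18)
  moreover have "inner8 ?h ?h = 2"
    unfolding inner8_def sum8 using sq1[OF assms(1)] sq1[OF assms(2)] sq1[OF assms(3)]
      sq1[OF assms(4)] sq1[OF assms(5)] sq1[OF assms(6)] sq1[OF assms(7)] sq1[OF assms(8)]
    by (simp add: hv_def)
  ultimately show ?thesis unfolding e8_roots_def by auto
qed

lemma sq_int_le2: fixes z :: int assumes "z * z \<le> 2" "z \<noteq> 0" shows "z = 1 \<or> z = -1"
proof (rule ccontr)
  assume "\<not> (z = 1 \<or> z = -1)"
  then have "\<bar>z\<bar> \<ge> 2" using assms(2) by auto
  then have "\<bar>z\<bar> * \<bar>z\<bar> \<ge> 2 * 2" by (intro mult_mono) auto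
  then show False using assms(1) by (simp add: abs_mult_self_eq)
qed

lemma root_char:
  assumes "r \<in> e8_roots"
  shows "(\<exists>i j a b. i \<in> {1..8} \<and> j \<in> {1..8} \<and> i < j \<and> a \<in> {-1,1} \<and> b \<in> {-1,1} \<and> r = iv i j a b) \<or>
         (\<exists>e1 e2 e3 e4 e5 e6 e7 e8. e1 \<in> {-1,1} \<and> e2 \<in> {-1,1} \<and> e3 \<in> {-1,1} \<and> e4 \<in> {-1,1} \<and>
            e5 \<in> {-1,1} \<and> e6 \<in> {-1,1} \<and> e7 \<in> {-1,1} \<and> e8 \<in> {-1,1} \<and>
            e1*e2*e3*e4*e5*e6*e7*e8 = 1 \<and> r = hv e1 e2 e3 e4 e5 e6 e7 e8)"
proof -
  from assms have supp: "\<forall>i. i \<notin> {1..8} \<longrightarrow> r i = 0"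
    and ty0: "(\<forall>i\<in>{1..8}. r i \<in> \<int>) \<or> (\<forall>i\<in>{1..8}. r i - 1/2 \<in> \<int>)"
    and sm: "\<exists>k::int. (\<Sum>i=1..8. r i) = 2 * of_int k"
    and nn: "(\<Sum>i=1..8. r i * r i) = 2"
    by (auto simp: e8_roots_def e8_lattice_def inner8_def)
  from ty0 show ?thesis
  proof
    assume int: "\<forall>i\<in>{1..8}. r i \<in> \<int>"
    let ?P = "{i\<in>{1..8::nat}. r i \<noteq> 0}"
    have le: "r i * r i \<le> 2" if "i \<in> {1..8}" for i
    proof -
      have "r i * r i \<le> (\<Sum>k=1..8. r k * r k)"
        by (rule member_le_sum) (use that in auto)
      then show ?thesis using nn by linarith
    qed
    have one: "r i = 1 \<or> r i = -1" if "i \<in> ?P" for i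
    proof -
      have "i \<in> {1..8}" using that by simp
      then have "r i \<in> \<int>" using int by blast
      then obtain z::int where z: "r i = of_int z" by (auto elim: Ints_cases)
      have "z \<noteq> 0" using z that by auto
      have "of_int (z*z) \<le> (of_int 2::real)" using le[of i] that z by simp
      then have "z*z \<le> 2" by (simp only: of_int_le_iff)
      then have "z = 1 \<or> z = -1" using sq_int_le2 \<open>z \<noteq> 0\<close> by blast
      then show ?thesis using z by auto
    qed
    have "(\<Sum>k=1..8. r k * r k) = (\<Sum>k\<in>?P. r k * r k)"
      by (rule sum.mono_neutral_right) auto
    also have "\<dots> = (\<Sum>k\<in>?P. 1)"
    proof (rule sum.cong)
      fix x assume "x \<in> ?P"
      then have "r x = 1 \<or> r x = -1" by (rule one)
      then show "r x * r x = 1" by auto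
    qed simp
    finally have "card ?P = 2" using nn by simp
    then obtain x y where Pxy: "?P = {x,y}" "x \<noteq> y" unfolding card_2_iff by blast
    obtain i j where Pij: "?P = {i,j}" "i < j"
    proof (cases "x < y")
      case True then show ?thesis using Pxy by (intro that[of x y]) auto
    next
      case False then have "y < x" using Pxy(2) by simp
      then show ?thesis using Pxy by (intro that[of y x]) auto
    qed
    have iP: "i \<in> ?P" and jP: "j \<in> ?P" using Pij(1) by auto
    define a where "a = (if r i = 1 then 1 else -1 :: int)"
    define b where "b = (if r j = 1 then 1 else -1 :: int)"
    have ra: "r i = of_int a" using one[OF iP] by (auto simp: a_def)
    have rb: "r j = of_int b" using one[OF jP] by (auto simp: b_def)
    have "r = iv i j a b"
    proof
      fix k
      show "r k = iv i j a b k"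
      proof (cases "k = i \<or> k = j")
        case True then show ?thesis using ra rb Pij(2) by (auto simp: iv_def)
      next
        case False
        then have "k \<notin> ?P" using Pij(1) by auto
        then have "r k = 0" using supp by auto
        then show ?thesis using False by (auto simp: iv_def)
      qed
    qed
    moreover have "a \<in> {-1,1}" "b \<in> {-1,1}" by (auto simp: a_def b_def)
    ultimately have "i \<in> {1..8} \<and> j \<in> {1..8} \<and> i < j \<and> a \<in> {-1,1} \<and> b \<in> {-1,1} \<and> r = iv i j a b"
      using iP jP Pij(2) by simp
    then show ?thesis by (intro disjI1 exI)
  next
    assume half: "\<forall>i\<in>{1..8}. r i - 1/2 \<in> \<int>"
    have ge: "r i * r i - 1/4 \<ge> 0" if "i \<in> {1..8}" for i
    proof -
      have "r i - 1/2 \<in> \<int>" using half that by blast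
      then obtain z::int where z: "r i - 1/2 = of_int z" by (auto elim: Ints_cases)
      have "z * (z+1) \<ge> 0"
        by (cases "z \<ge> 0") (auto intro: mult_nonneg_nonneg mult_nonpos_nonpos)
      then have "(of_int (z * (z+1)) :: real) \<ge> 0" by (simp only: of_int_0_le_iff)
      moreover have "r i * r i - 1/4 = of_int (z * (z+1))"
        using z by (simp add: algebra_simps eq_diff_eq)
      ultimately show ?thesis by simp
    qed
    have "(\<Sum>i=1..8. r i * r i - 1/4) = 0" using nn by (simp add: sum_subtractf)
    then have z0: "\<forall>i\<in>{1..8}. r i * r i - 1/4 = 0"
      using sum_nonneg_eq_0_iff[of "{1..8::nat}" "\<lambda>i. r i * r i - 1/4"] ge by auto
    have pm: "r i = 1/2 \<or> r i = -1/2" if "i \<in> {1..8}" for i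
    proof -
      have "(r i - 1/2) * (r i + 1/2) = 0" using z0 that by (simp add: algebra_simps)
      then show ?thesis by auto
    qed
    define e :: "nat \<Rightarrow> int" where "e k = (if r k = 1/2 then 1 else -1)" for k
    have re: "r k = of_int (e k) / 2" if "k \<in> {1..8}" for k
      using pm[OF that] by (auto simp: e_def)
    have ee: "e k \<in> {-1,1}" for k by (auto simp: e_def)
    have eq: "r = hv (e 1) (e 2) (e 3) (e 4) (e 5) (e 6) (e 7) (e 8)"
    proof
      fix k
      show "r k = hv (e 1) (e 2) (e 3) (e 4) (e 5) (e 6) (e 7) (e 8) k"
      proof (cases "k \<in> {1..8}")
        case True
        then have "k = 1 \<or> k = 2 \<or> k = 3 \<or> k = 4 \<or> k = 5 \<or> k = 6 \<or> k = 7 \<or> k = 8" by auto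
        then show ?thesis using re[OF True] by (auto simp: hv_def)
      next
        case False then show ?thesis using supp by (auto simp: hv_def)
      qed
    qed
    obtain k::int where k: "(\<Sum>i=1..8. r i) = 2 * of_int k" using sm by blast
    have "(\<Sum>i=1..8. r i) = of_int (e 1 + e 2 + e 3 + e 4 + e 5 + e 6 + e 7 + e 8) / 2"
      unfolding sum8 by (simp add: re add_divide_distrib)
    then have "(of_int (e 1 + e 2 + e 3 + e 4 + e 5 + e 6 + e 7 + e 8) :: real) = of_int (4 * k)"
      using k by simp
    then have "e 1 + e 2 + e 3 + e 4 + e 5 + e 6 + e 7 + e 8 = 4 * k" by (simp only: of_int_eq_iff)
    then have "4 dvd (e 1 + e 2 + e 3 + e 4 + e 5 + e 6 + e 7 + e 8)" by (metis dvd_triv_left)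
    then have pr: "e 1 * e 2 * e 3 * e 4 * e 5 * e 6 * e 7 * e 8 = 1"
      using parity[OF ee ee ee ee ee ee ee ee] by blast
    show ?thesis
      apply (rule disjI2)
      apply (rule exI[of _ "e 1"], rule exI[of _ "e 2"], rule exI[of _ "e 3"], rule exI[of _ "e 4"])
      apply (rule exI[of _ "e 5"], rule exI[of _ "e 6"], rule exI[of _ "e 7"], rule exI[of _ "e 8"])
      apply (intro conjI ee pr eq)
      done
  qed
qed



definition C1 :: "int \<Rightarrow> int \<Rightarrow> int \<Rightarrow> int \<Rightarrow> bool" where
  "C1 m5 m6 m7 m8 = (m5 \<noteq> 0 \<and> m6 \<noteq> 0 \<and> m7 \<noteq> 0 \<and> m8 \<noteq> 0 \<and>
     m5 \<noteq> m6 \<and> m5 \<noteq> -m6 \<and> m5 \<noteq> m7 \<and> m5 \<noteq> -m7 \<and> m5 \<noteq> m8 \<and> m5 \<noteq> -m8 \<and>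
     m6 \<noteq> m7 \<and> m6 \<noteq> -m7 \<and> m6 \<noteq> m8 \<and> m6 \<noteq> -m8 \<and> m7 \<noteq> m8 \<and> m7 \<noteq> -m8)"

definition C2 :: "int \<Rightarrow> int \<Rightarrow> int \<Rightarrow> int \<Rightarrow> int \<Rightarrow> bool" where
  "C2 k m5 m6 m7 m8 = (\<forall>s6\<in>{-1,1::int}. \<forall>s7\<in>{-1,1::int}. \<forall>s8\<in>{-1,1::int}.
              k * m5 \<noteq> s6 * m6 + s7 * m7 + s8 * m8)"

definition Aset :: "(nat \<Rightarrow> real) set" where
  "Aset = set [iv 1 2 1 1, iv 1 2 (-1) (-1), iv 1 2 1 (-1), iv 1 2 (-1) 1,
     iv 3 4 1 (-1), iv 3 4 (-1) 1, iv 4 5 1 (-1), iv 4 5 (-1) 1, iv 3 5 1 (-1), iv 3 5 (-1) 1]"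

definition lint :: "int \<Rightarrow> int \<Rightarrow> int \<Rightarrow> int \<Rightarrow> nat \<Rightarrow> int" where
  "lint m5 m6 m7 m8 = (\<lambda>i. if i \<in> {3,4,5} then m5 else if i = 6 then m6
      else if i = 7 then m7 else if i = 8 then m8 else 0)"

lemma lvec_lint: "lvec m5 m6 m7 m8 i = of_int (lint m5 m6 m7 m8 i)"
  by (simp add: lvec_def lint_def)

lemma inner_iv: "i \<noteq> j \<Longrightarrow> i \<in> {1..8} \<Longrightarrow> j \<in> {1..8} \<Longrightarrow>
   inner8 f (iv i j a b) = f i * of_int a + f j * of_int b"
  unfolding inner8_def by (rule sum_iv)

lemma inner_hv: "inner8 (lvec m5 m6 m7 m8) (hv e1 e2 e3 e4 e5 e6 e7 e8) =
   of_int (m5*(e3+e4+e5) + m6*e6 + m7*e7 + m8*e8) / 2"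
  unfolding inner8_def sum8 by (simp add: lvec_def hv_def field_simps)

lemma A_card: "card Aset = 10"
proof -
  let ?c = "\<lambda>r::nat\<Rightarrow>real. (r 1, r 2, r 3, r 4, r 5)"
  have "card (?c ` Aset) = 10" by (simp add: Aset_def iv_def)
  moreover have "card (?c ` Aset) \<le> card Aset" by (rule card_image_le) (simp add: Aset_def)
  moreover have "card Aset \<le> 10" unfolding Aset_def by (rule card_length[THEN order_trans]) simp
  ultimately show ?thesis by linarith
qed

lemma A_roots: "Aset \<subseteq> {r\<in>e8_roots. inner8 (lvec m5 m6 m7 m8) r = 0}"
  unfolding Aset_def by (auto intro!: iv_root simp: inner_iv lvec_def)

lemma notA: "r 6 \<noteq> 0 \<or> r 7 \<noteq> 0 \<or> r 8 \<noteq> 0 \<or> r 3 + r 4 + r 5 \<noteq> 0 \<Longrightarrow> r \<notin> Aset"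
  by (auto simp: Aset_def iv_def)

lemma C1_facts: assumes "C1 m5 m6 m7 m8" shows
  "m5 \<noteq> 0"
  "m6 \<noteq> 0"
  "m7 \<noteq> 0"
  "m8 \<noteq> 0"
  "m5 \<noteq> m6"
  "m6 \<noteq> m5"
  "- m5 \<noteq> m6"
  "- m6 \<noteq> m5"
  "m5 + m6 \<noteq> 0"
  "m6 + m5 \<noteq> 0"
  "m5 \<noteq> m7"
  "m7 \<noteq> m5"
  "- m5 \<noteq> m7"
  "- m7 \<noteq> m5"
  "m5 + m7 \<noteq> 0"
  "m7 + m5 \<noteq> 0"
  "m5 \<noteq> m8"
  "m8 \<noteq> m5"
  "- m5 \<noteq> m8"
  "- m8 \<noteq> m5"
  "m5 + m8 \<noteq> 0"
  "m8 + m5 \<noteq> 0"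
  "m6 \<noteq> m7"
  "m7 \<noteq> m6"
  "- m6 \<noteq> m7"
  "- m7 \<noteq> m6"
  "m6 + m7 \<noteq> 0"
  "m7 + m6 \<noteq> 0"
  "m6 \<noteq> m8"
  "m8 \<noteq> m6"
  "- m6 \<noteq> m8"
  "- m8 \<noteq> m6"
  "m6 + m8 \<noteq> 0"
  "m8 + m6 \<noteq> 0"
  "m7 \<noteq> m8"
  "m8 \<noteq> m7"
  "- m7 \<noteq> m8"
  "- m8 \<noteq> m7"
  "m7 + m8 \<noteq> 0"
  "m8 + m7 \<noteq> 0"
  using assms unfolding C1_def by (auto simp: add_eq_0_iff)

lemma pm_rel: fixes x y a b :: int
  assumes "a \<in> {-1,1}" "b \<in> {-1,1}" "x * a + y * b = 0"
  shows "(x = y \<and> b = -a) \<or> (x = -y \<and> b = a)"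
  using assms by auto

lemma int_arith:
  assumes "C1 m5 m6 m7 m8" "i \<in> {1..8}" "j \<in> {1..8}" "i < j" "a \<in> {-1,1}" "b \<in> {-1,1}"
    "lint m5 m6 m7 m8 i * a + lint m5 m6 m7 m8 j * b = 0"
  shows "(i = 1 \<and> j = 2) \<or> ((i = 3 \<or> i = 4) \<and> (j = 4 \<or> j = 5) \<and> b = -a)"
proof -
  have i8: "i = 1 \<or> i = 2 \<or> i = 3 \<or> i = 4 \<or> i = 5 \<or> i = 6 \<or> i = 7 \<or> i = 8"
    using assms(2) by (simp only: set18 insert_iff empty_iff simp_thms)
  have j8: "j = 1 \<or> j = 2 \<or> j = 3 \<or> j = 4 \<or> j = 5 \<or> j = 6 \<or> j = 7 \<or> j = 8"
    using assms(3) by (simp only: set18 insert_iff empty_iff simp_thms)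
  have rel: "(lint m5 m6 m7 m8 i = lint m5 m6 m7 m8 j \<and> b = -a) \<or> (lint m5 m6 m7 m8 i = - lint m5 m6 m7 m8 j \<and> b = a)"
    using pm_rel[OF assms(5,6,7)] .
  have L: "lint m5 m6 m7 m8 1 = 0" "lint m5 m6 m7 m8 (Suc 0) = 0" "lint m5 m6 m7 m8 2 = 0" "lint m5 m6 m7 m8 3 = m5" "lint m5 m6 m7 m8 4 = m5"
     "lint m5 m6 m7 m8 5 = m5" "lint m5 m6 m7 m8 6 = m6" "lint m5 m6 m7 m8 7 = m7" "lint m5 m6 m7 m8 8 = m8"
    by (simp_all add: lint_def)
  note F = C1_facts[OF assms(1)]
  have z: "0 \<noteq> m5" "0 \<noteq> m6" "0 \<noteq> m7" "0 \<noteq> m8" using F by auto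
  show ?thesis
    by (insert i8 j8 assms(4)) (elim disjE; insert rel; simp add: L; insert F z; blast)
qed

lemma int_case:
  assumes "C1 m5 m6 m7 m8" "i \<in> {1..8}" "j \<in> {1..8}" "i < j" "a \<in> {-1,1}" "b \<in> {-1,1}"
    "inner8 (lvec m5 m6 m7 m8) (iv i j a b) = 0"
  shows "iv i j a b \<in> Aset"
proof -
  have "(of_int (lint m5 m6 m7 m8 i * a + lint m5 m6 m7 m8 j * b) :: real) = 0"
    using assms(7) inner_iv[of i j, OF _ assms(2,3)] assms(4) by (simp add: lvec_lint)
  then have "lint m5 m6 m7 m8 i * a + lint m5 m6 m7 m8 j * b = 0" by (simp only: of_int_eq_0_iff)
  then have "(i = 1 \<and> j = 2) \<or> ((i = 3 \<or> i = 4) \<and> (j = 4 \<or> j = 5) \<and> b = -a)"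
    using int_arith[OF assms(1-6)] by blast
  then show ?thesis using assms(4-6) by (auto simp: Aset_def)
qed

lemma half_case:
  fixes e3 e4 e5 e6 e7 e8 m5 m6 m7 m8 :: int
  assumes "e3 \<in> {-1,1}" "e4 \<in> {-1,1}" "e5 \<in> {-1,1}" "e6 \<in> {-1,1}" "e7 \<in> {-1,1}" "e8 \<in> {-1,1}"
    "m5*(e3+e4+e5) + m6*e6 + m7*e7 + m8*e8 = 0" "C2 1 m5 m6 m7 m8"
  shows "e3 = e4 \<and> e4 = e5 \<and> 3*m5 = (-e3*e6)*m6 + (-e3*e7)*m7 + (-e3*e8)*m8"
proof -
  have c2: "m5 \<noteq> s6 * m6 + s7 * m7 + s8 * m8" if "s6 \<in> {-1,1}" "s7 \<in> {-1,1}" "s8 \<in> {-1,1}" for s6 s7 s8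
    using assms(8) that unfolding C2_def by auto
  have pm: "x * y \<in> {-1,1}" if "x \<in> {-1,1}" "y \<in> {-1,1}" for x y :: int using that by auto
  show ?thesis
  proof (cases "e3 = e4 \<and> e4 = e5")
    case True
    then show ?thesis using assms(1,7) by (auto simp: algebra_simps)
  next
    case False
    define \<sigma> where "\<sigma> = e3 + e4 + e5"
    have sg: "\<sigma> = 1 \<or> \<sigma> = -1" using False assms(1-3) unfolding \<sigma>_def by auto
    have eq: "m5 * \<sigma> + m6*e6 + m7*e7 + m8*e8 = 0" using assms(7) unfolding \<sigma>_def by simp
    have "m5 = (-\<sigma>*e6) * m6 + (-\<sigma>*e7) * m7 + (-\<sigma>*e8) * m8"
      using sg eq by (auto simp: algebra_simps)
    moreover have "m5 \<noteq> (-\<sigma>*e6) * m6 + (-\<sigma>*e7) * m7 + (-\<sigma>*e8) * m8"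
      apply (rule c2) using sg assms(4-6) by auto
    ultimately show ?thesis by blast
  qed
qed


lemma roots_finite: "finite e8_roots"
proof -
  let ?I = "(\<lambda>(i,j,a,b). iv i j a b) ` ({1..8::nat} \<times> {1..8::nat} \<times> {-1,1::int} \<times> {-1,1::int})"
  let ?H = "(\<lambda>(e1,e2,e3,e4,e5,e6,e7,e8). hv e1 e2 e3 e4 e5 e6 e7 e8) `
     ({-1,1::int} \<times> {-1,1::int} \<times> {-1,1::int} \<times> {-1,1::int} \<times> {-1,1::int} \<times> {-1,1::int} \<times> {-1,1::int} \<times> {-1,1::int})"
  have "e8_roots \<subseteq> ?I \<union> ?H"
  proof
    fix r assume "r \<in> e8_roots"
    from root_char[OF this] show "r \<in> ?I \<union> ?H"
    proof
      assume "\<exists>i j a b. i \<in> {1..8} \<and> j \<in> {1..8} \<and> i < j \<and> a \<in> {-1,1} \<and> b \<in> {-1,1} \<and> r = iv i j a b"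
      then obtain i j a b where h: "i \<in> {1..8}" "j \<in> {1..8}" "a \<in> {-1,1}" "b \<in> {-1,1}" "r = iv i j a b"
        by (elim exE conjE) (rule that; assumption)
      have "r \<in> ?I" by (rule image_eqI[where x="(i,j,a,b)"]) (use h in auto)
      then show ?thesis by (rule UnI1)
    next
      assume "\<exists>e1 e2 e3 e4 e5 e6 e7 e8. e1 \<in> {-1,1} \<and> e2 \<in> {-1,1} \<and> e3 \<in> {-1,1} \<and> e4 \<in> {-1,1} \<and>
            e5 \<in> {-1,1} \<and> e6 \<in> {-1,1} \<and> e7 \<in> {-1,1} \<and> e8 \<in> {-1,1} \<and>
            e1*e2*e3*e4*e5*e6*e7*e8 = 1 \<and> r = hv e1 e2 e3 e4 e5 e6 e7 e8"
      then obtain e1 e2 e3 e4 e5 e6 e7 e8 where h: "e1 \<in> {-1,1}" "e2 \<in> {-1,1}" "e3 \<in> {-1,1}" "e4 \<in> {-1,1}"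
            "e5 \<in> {-1,1}" "e6 \<in> {-1,1}" "e7 \<in> {-1,1}" "e8 \<in> {-1,1}" "r = hv e1 e2 e3 e4 e5 e6 e7 e8"
        by (elim exE conjE) (rule that; assumption)
      have "r \<in> ?H" by (rule image_eqI[where x="(e1,e2,e3,e4,e5,e6,e7,e8)"]) (simp add: h(9), intro SigmaI h(1-8))
      then show ?thesis by (rule UnI2)
    qed
  qed
  moreover have "finite (?I \<union> ?H)"
    by (intro finite_UnI finite_imageI finite_cartesian_product finite.insertI finite.emptyI finite_atLeastAtMost)
  ultimately show ?thesis by (rule finite_subset)
qed

lemma wit:
  assumes "\<not> (C1 m5 m6 m7 m8 \<and> C2 1 m5 m6 m7 m8 \<and> C2 3 m5 m6 m7 m8)"
  shows "\<exists>r. r \<in> e8_roots \<and> inner8 (lvec m5 m6 m7 m8) r = 0 \<and> r \<notin> Aset"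
proof -
  have wi: "\<exists>r. r \<in> e8_roots \<and> inner8 (lvec m5 m6 m7 m8) r = 0 \<and> r \<notin> Aset"
    if "i \<noteq> j" "i \<in> {1..8}" "j \<in> {1..8}" "a \<in> {-1,1}" "b \<in> {-1,1}"
       "lint m5 m6 m7 m8 i * a + lint m5 m6 m7 m8 j * b = 0"
       "iv i j a b 6 \<noteq> 0 \<or> iv i j a b 7 \<noteq> 0 \<or> iv i j a b 8 \<noteq> 0 \<or> iv i j a b 3 + iv i j a b 4 + iv i j a b 5 \<noteq> 0" for i j a b
  proof (intro exI conjI)
    show "iv i j a b \<in> e8_roots" by (rule iv_root[OF that(1-5)])
    have "lvec m5 m6 m7 m8 i * of_int a + lvec m5 m6 m7 m8 j * of_int b
        = (of_int (lint m5 m6 m7 m8 i * a + lint m5 m6 m7 m8 j * b) :: real)"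
      by (simp add: lvec_lint)
    also have "\<dots> = 0" using that(6) by simp
    finally show "inner8 (lvec m5 m6 m7 m8) (iv i j a b) = 0"
      by (simp add: inner_iv[OF that(1-3)])
    show "iv i j a b \<notin> Aset" by (rule notA) (use that(7) in auto)
  qed
  have wh: "\<exists>r. r \<in> e8_roots \<and> inner8 (lvec m5 m6 m7 m8) r = 0 \<and> r \<notin> Aset"
    if "e1 \<in> {-1,1}" "e2 \<in> {-1,1}" "e3 \<in> {-1,1}" "e4 \<in> {-1,1}"
       "e5 \<in> {-1,1}" "e6 \<in> {-1,1}" "e7 \<in> {-1,1}" "e8 \<in> {-1,1}" "e1*e2*e3*e4*e5*e6*e7*e8 = 1"
       "m5*(e3+e4+e5) + m6*e6 + m7*e7 + m8*e8 = 0" for e1 e2 e3 e4 e5 e6 e7 e8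
  proof (intro exI conjI)
    show "hv e1 e2 e3 e4 e5 e6 e7 e8 \<in> e8_roots" by (rule hv_root[OF that(1-9)])
    show "inner8 (lvec m5 m6 m7 m8) (hv e1 e2 e3 e4 e5 e6 e7 e8) = 0"
      using that(10) by (simp add: inner_hv)
    show "hv e1 e2 e3 e4 e5 e6 e7 e8 \<notin> Aset" by (rule notA) (use that(6) in \<open>auto simp: hv_def\<close>)
  qed
  show ?thesis
  proof (cases "C1 m5 m6 m7 m8")
    case False
    then have "m5 = 0 \<or> m6 = 0 \<or> m7 = 0 \<or> m8 = 0 \<or> m5 = m6 \<or> m5 = -m6 \<or> m5 = m7 \<or> m5 = -m7 \<or>
      m5 = m8 \<or> m5 = -m8 \<or> m6 = m7 \<or> m6 = -m7 \<or> m6 = m8 \<or> m6 = -m8 \<or> m7 = m8 \<or> m7 = -m8"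
      by (simp only: C1_def de_Morgan_conj not_not)
    then show ?thesis
    proof (elim disjE)
      assume h: "m5 = 0" show ?thesis by (rule wi[of 1 3 1 1]) (simp_all add: h lint_def iv_def)
    next
      assume h: "m6 = 0" show ?thesis by (rule wi[of 1 6 1 1]) (simp_all add: h lint_def iv_def)
    next
      assume h: "m7 = 0" show ?thesis by (rule wi[of 1 7 1 1]) (simp_all add: h lint_def iv_def)
    next
      assume h: "m8 = 0" show ?thesis by (rule wi[of 1 8 1 1]) (simp_all add: h lint_def iv_def)
    next
      assume h: "m5 = m6" show ?thesis by (rule wi[of 3 6 1 "-1"]) (simp_all add: h lint_def iv_def)
    next
      assume h: "m5 = -m6" show ?thesis by (rule wi[of 3 6 1 1]) (simp_all add: h lint_def iv_def)
    next
      assume h: "m5 = m7" show ?thesis by (rule wi[of 3 7 1 "-1"]) (simp_all add: h lint_def iv_def)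
    next
      assume h: "m5 = -m7" show ?thesis by (rule wi[of 3 7 1 1]) (simp_all add: h lint_def iv_def)
    next
      assume h: "m5 = m8" show ?thesis by (rule wi[of 3 8 1 "-1"]) (simp_all add: h lint_def iv_def)
    next
      assume h: "m5 = -m8" show ?thesis by (rule wi[of 3 8 1 1]) (simp_all add: h lint_def iv_def)
    next
      assume h: "m6 = m7" show ?thesis by (rule wi[of 6 7 1 "-1"]) (simp_all add: h lint_def iv_def)
    next
      assume h: "m6 = -m7" show ?thesis by (rule wi[of 6 7 1 1]) (simp_all add: h lint_def iv_def)
    next
      assume h: "m6 = m8" show ?thesis by (rule wi[of 6 8 1 "-1"]) (simp_all add: h lint_def iv_def)
    next
      assume h: "m6 = -m8" show ?thesis by (rule wi[of 6 8 1 1]) (simp_all add: h lint_def iv_def)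
    next
      assume h: "m7 = m8" show ?thesis by (rule wi[of 7 8 1 "-1"]) (simp_all add: h lint_def iv_def)
    next
      assume h: "m7 = -m8" show ?thesis by (rule wi[of 7 8 1 1]) (simp_all add: h lint_def iv_def)
    qed
  next
    case True
    then have "\<not> C2 1 m5 m6 m7 m8 \<or> \<not> C2 3 m5 m6 m7 m8" using assms by blast
    then obtain k s6 s7 s8 where k: "k = 1 \<or> k = 3" and s: "s6 \<in> {-1,1}" "s7 \<in> {-1,1}" "s8 \<in> {-1,1}"
      and eq: "k * m5 = s6 * m6 + s7 * m7 + s8 * m8"
      unfolding C2_def by blast
    from k show ?thesis
    proof
      assume k1: "k = 1"
      have eq1: "m5 * (1 + 1 + -1) + m6 * (-s6) + m7 * (-s7) + m8 * (-s8) = 0"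
        using eq k1 by (simp add: algebra_simps)
      show ?thesis by (rule wh[of 1 "s6*s7*s8" 1 1 "-1" "-s6" "-s7" "-s8", OF _ _ _ _ _ _ _ _ _ eq1])
        (use s in auto)
    next
      assume k3: "k = 3"
      have eq3: "m5 * (1 + 1 + 1) + m6 * (-s6) + m7 * (-s7) + m8 * (-s8) = 0"
        using eq k3 by (simp add: algebra_simps)
      show ?thesis by (rule wh[of 1 "-(s6*s7*s8)" 1 1 1 "-s6" "-s7" "-s8", OF _ _ _ _ _ _ _ _ _ eq3])
        (use s in auto)
    qed
  qed
qed

lemma noextra:
  assumes "C1 m5 m6 m7 m8" "C2 1 m5 m6 m7 m8" "C2 3 m5 m6 m7 m8"
  shows "{r \<in> e8_roots. inner8 (lvec m5 m6 m7 m8) r = 0} - Aset = {}"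
proof (rule ccontr)
  assume "{r \<in> e8_roots. inner8 (lvec m5 m6 m7 m8) r = 0} - Aset \<noteq> {}"
  then obtain r where rr: "r \<in> e8_roots" "inner8 (lvec m5 m6 m7 m8) r = 0" "r \<notin> Aset" by blast
  from root_char[OF rr(1)] show False
  proof
    assume "\<exists>i j a b. i \<in> {1..8} \<and> j \<in> {1..8} \<and> i < j \<and> a \<in> {-1,1} \<and> b \<in> {-1,1} \<and> r = iv i j a b"
    then obtain i j a b where ij: "i \<in> {1..8}" "j \<in> {1..8}" "i < j" "a \<in> {-1,1}" "b \<in> {-1,1}" and rij: "r = iv i j a b"
      by (elim exE conjE) (rule that; assumption)
    have "r \<in> Aset" unfolding rij by (rule int_case[OF assms(1) ij]) (use rr(2) rij in simp)
    then show False using rr(3) by blast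
  next
    assume "\<exists>e1 e2 e3 e4 e5 e6 e7 e8. e1 \<in> {-1,1} \<and> e2 \<in> {-1,1} \<and> e3 \<in> {-1,1} \<and> e4 \<in> {-1,1} \<and>
            e5 \<in> {-1,1} \<and> e6 \<in> {-1,1} \<and> e7 \<in> {-1,1} \<and> e8 \<in> {-1,1} \<and>
            e1*e2*e3*e4*e5*e6*e7*e8 = 1 \<and> r = hv e1 e2 e3 e4 e5 e6 e7 e8"
    then obtain e1 e2 e3 e4 e5 e6 e7 e8 where e: "e1 \<in> {-1,1}" "e2 \<in> {-1,1}" "e3 \<in> {-1,1}" "e4 \<in> {-1,1}"
            "e5 \<in> {-1,1}" "e6 \<in> {-1,1}" "e7 \<in> {-1,1}" "e8 \<in> {-1,1}" and req: "r = hv e1 e2 e3 e4 e5 e6 e7 e8"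
      by (elim exE conjE) (rule that; assumption)
    have "(of_int (m5*(e3+e4+e5) + m6*e6 + m7*e7 + m8*e8) :: real) / 2 = 0" using rr(2) unfolding req inner_hv .
    then have "m5*(e3+e4+e5) + m6*e6 + m7*e7 + m8*e8 = 0" by (metis divide_eq_0_iff of_int_eq_0_iff zero_neq_numeral)
    from half_case[OF e(3-8) this assms(2)]
    have h: "3*m5 = (-e3*e6)*m6 + (-e3*e7)*m7 + (-e3*e8)*m8" by blast
    have "-e3*e6 \<in> {-1,1}" "-e3*e7 \<in> {-1,1}" "-e3*e8 \<in> {-1,1}" using e(3) e(6) e(7) e(8) by auto
    note c3 = assms(3)[unfolded C2_def, rule_format, OF this]
    then show False using h by blast
  qed
qed

lemma part14:
  assumes "C1 m5 m6 m7 m8" "C2 1 m5 m6 m7 m8"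
   "card {(s6, s7, s8). s6 \<in> {-1,1::int} \<and> s7 \<in> {-1,1::int} \<and> s8 \<in> {-1,1::int} \<and>
                   3 * m5 = s6 * m6 + s7 * m7 + s8 * m8} = 1"
  shows "card ({r \<in> e8_roots. inner8 (lvec m5 m6 m7 m8) r = 0} - Aset) = 4"
proof -
  let ?T = "{(s6, s7, s8). s6 \<in> {-1,1::int} \<and> s7 \<in> {-1,1::int} \<and> s8 \<in> {-1,1::int} \<and>
                   3 * m5 = s6 * m6 + s7 * m7 + s8 * m8}"
  obtain x where x: "?T = {x}" using assms(3) by (rule card_1_singletonE)
  obtain a0 b0 c0 where xabc: "x = (a0,b0,c0)" by (cases x)
  have "(a0,b0,c0) \<in> ?T" using x xabc by simp
  then have mem: "a0 \<in> {-1,1}" "b0 \<in> {-1,1}" "c0 \<in> {-1,1}" "3*m5 = a0*m6+b0*m7+c0*m8" by auto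
  have uniq: "x1 = a0 \<and> y1 = b0 \<and> z1 = c0"
    if "x1 \<in> {-1,1}" "y1 \<in> {-1,1}" "z1 \<in> {-1,1}" "3*m5 = x1*m6+y1*m7+z1*m8" for x1 y1 z1
  proof -
    have "(x1,y1,z1) \<in> ?T" using that by simp
    then have "(x1,y1,z1) \<in> {x}" by (simp only: x)
    then show ?thesis using xabc by simp
  qed
  define t where "t = -(a0*b0*c0)"
  define f where "f = (\<lambda>(p::int,q::int). hv p (t*p) q q q (-q*a0) (-q*b0) (-q*c0))"
  let ?D = "{-1,1::int} \<times> {-1,1::int}"
  have inj: "inj_on f ?D"
  proof (rule inj_onI)
    fix u v assume uv: "u \<in> ?D" "v \<in> ?D" "f u = f v"
    obtain p q where u: "u = (p,q)" by (cases u)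
    obtain p' q' where v: "v = (p',q')" by (cases v)
    have "f u 1 = f v 1" "f u 3 = f v 3" using uv(3) by simp_all
    then have "p = p'" "q = q'" by (simp_all add: u v f_def hv_def)
    then show "u = v" using u v by simp
  qed
  have cardW: "card (f ` ?D) = 4" using card_image[OF inj] by simp
  have "{r \<in> e8_roots. inner8 (lvec m5 m6 m7 m8) r = 0} - Aset = f ` ?D"
  proof
    show "{r \<in> e8_roots. inner8 (lvec m5 m6 m7 m8) r = 0} - Aset \<subseteq> f ` ?D"
    proof
      fix r assume "r \<in> {r \<in> e8_roots. inner8 (lvec m5 m6 m7 m8) r = 0} - Aset"
      then have rr: "r \<in> e8_roots" "inner8 (lvec m5 m6 m7 m8) r = 0" "r \<notin> Aset" by auto
      from root_char[OF rr(1)] show "r \<in> f ` ?D"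
      proof
        assume "\<exists>i j a b. i \<in> {1..8} \<and> j \<in> {1..8} \<and> i < j \<and> a \<in> {-1,1} \<and> b \<in> {-1,1} \<and> r = iv i j a b"
        then obtain i j a b where ij: "i \<in> {1..8}" "j \<in> {1..8}" "i < j" "a \<in> {-1,1}" "b \<in> {-1,1}" and rij: "r = iv i j a b"
          by (elim exE conjE) (rule that; assumption)
        have "r \<in> Aset" unfolding rij by (rule int_case[OF assms(1) ij]) (use rr(2) rij in simp)
        then show ?thesis using rr(3) by blast
      next
        assume "\<exists>e1 e2 e3 e4 e5 e6 e7 e8. e1 \<in> {-1,1} \<and> e2 \<in> {-1,1} \<and> e3 \<in> {-1,1} \<and> e4 \<in> {-1,1} \<and>
            e5 \<in> {-1,1} \<and> e6 \<in> {-1,1} \<and> e7 \<in> {-1,1} \<and> e8 \<in> {-1,1} \<and>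
            e1*e2*e3*e4*e5*e6*e7*e8 = 1 \<and> r = hv e1 e2 e3 e4 e5 e6 e7 e8"
        then obtain e1 e2 e3 e4 e5 e6 e7 e8 where e: "e1 \<in> {-1,1}" "e2 \<in> {-1,1}" "e3 \<in> {-1,1}" "e4 \<in> {-1,1}"
            "e5 \<in> {-1,1}" "e6 \<in> {-1,1}" "e7 \<in> {-1,1}" "e8 \<in> {-1,1}"
          and pr: "e1*e2*e3*e4*e5*e6*e7*e8 = 1" and req: "r = hv e1 e2 e3 e4 e5 e6 e7 e8"
          by (elim exE conjE) (rule that; assumption)
        have "(of_int (m5*(e3+e4+e5) + m6*e6 + m7*e7 + m8*e8) :: real) / 2 = 0" using rr(2) unfolding req inner_hv .
    then have "m5*(e3+e4+e5) + m6*e6 + m7*e7 + m8*e8 = 0" by (metis divide_eq_0_iff of_int_eq_0_iff zero_neq_numeral)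
        from half_case[OF e(3-8) this assms(2)]
        have h: "e3 = e4" "e4 = e5" "3*m5 = (-e3*e6)*m6 + (-e3*e7)*m7 + (-e3*e8)*m8" by auto
        have "-e3*e6 \<in> {-1,1}" "-e3*e7 \<in> {-1,1}" "-e3*e8 \<in> {-1,1}" using e(3) e(6) e(7) e(8) by auto
        from uniq[OF this h(3)] have u: "-e3*e6 = a0" "-e3*e7 = b0" "-e3*e8 = c0" by auto
        have e678: "e6 = -e3*a0" "e7 = -e3*b0" "e8 = -e3*c0" using u e(3) by auto
        have pr2: "e1*e2*e3*e3*e3*(-e3*a0)*(-e3*b0)*(-e3*c0) = 1" using pr h(1,2) e678 by simp
        have "e2 = t*e1" using pr2 e(1,2,3) mem(1-3) unfolding t_def by auto
        then have "r = f (e1, e3)" using req h(1,2) e678 by (simp add: f_def)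
        moreover have "(e1,e3) \<in> ?D" using e(1) e(3) by auto
        ultimately show ?thesis by blast
      qed
    qed
    show "f ` ?D \<subseteq> {r \<in> e8_roots. inner8 (lvec m5 m6 m7 m8) r = 0} - Aset"
    proof
      fix r assume "r \<in> f ` ?D"
      then obtain u where u: "u \<in> ?D" "r = f u" by (rule imageE)
      obtain p q where puq: "u = (p,q)" by (cases u)
      have pq: "p \<in> {-1,1}" "q \<in> {-1,1}" "r = f (p,q)" using u puq by auto
      have rdef: "r = hv p (t*p) q q q (-q*a0) (-q*b0) (-q*c0)" using pq(3) by (simp add: f_def)
      have "r \<in> e8_roots" unfolding rdef by (rule hv_root) (use pq mem in \<open>auto simp: t_def\<close>)
      moreover have "inner8 (lvec m5 m6 m7 m8) r = 0"
      proof -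
        have "m5*(q+q+q) + m6*(-q*a0) + m7*(-q*b0) + m8*(-q*c0) = q*(3*m5 - (a0*m6+b0*m7+c0*m8))"
          by (simp add: algebra_simps)
        also have "\<dots> = 0" using mem(4) by simp
        finally show ?thesis unfolding rdef inner_hv by simp
      qed
      moreover have "r \<notin> Aset"
      proof (rule notA, rule disjI1)
        show "r 6 \<noteq> 0" unfolding rdef hv_def using pq(2) mem(1) by auto
      qed
      ultimately show "r \<in> {r \<in> e8_roots. inner8 (lvec m5 m6 m7 m8) r = 0} - Aset" by blast
    qed
  qed
  then show ?thesis using cardW by simp
qed


theorem proposition7p8:
  fixes m5 m6 m7 m8 :: int
  assumes "even (m5 + m6 + m7 + m8)"
  defines "m \<equiv> (\<lambda>j::nat. if j = 5 then m5 else if j = 6 then m6 else if j = 7 then m7 else m8)"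
  defines "condi \<equiv> (\<forall>j\<in>{5..8}. m j \<noteq> 0) \<and> (\<forall>i\<in>{5..8}. \<forall>j\<in>{5..8}. i < j \<longrightarrow> m i \<noteq> m j \<and> m i \<noteq> - m j)"
  defines "condii \<equiv> (\<lambda>k::int. \<forall>s6\<in>{-1,1::int}. \<forall>s7\<in>{-1,1::int}. \<forall>s8\<in>{-1,1::int}.
              k * m5 \<noteq> s6 * m6 + s7 * m7 + s8 * m8)"
  shows "(num_orth_roots (lvec m5 m6 m7 m8) = 10 \<longleftrightarrow> condi \<and> condii 1 \<and> condii 3) \<and>
         (condi \<and> condii 1 \<and>
            card {(s6, s7, s8). s6 \<in> {-1,1::int} \<and> s7 \<in> {-1,1::int} \<and> s8 \<in> {-1,1::int} \<and>
                   3 * m5 = s6 * m6 + s7 * m7 + s8 * m8} = 1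
          \<longrightarrow> num_orth_roots (lvec m5 m6 m7 m8) = 14)"
proof -
  let ?l = "lvec m5 m6 m7 m8"
  let ?S = "{r \<in> e8_roots. inner8 ?l r = 0}"
  have num: "num_orth_roots ?l = card ?S" by (simp add: num_orth_roots_def)
  have finS: "finite ?S" using roots_finite by simp
  have AS: "Aset \<subseteq> ?S" by (rule A_roots)
  have "card (?S - Aset) = card ?S - card Aset" by (rule card_Diff_subset[OF finite_subset[OF AS finS] AS])
  moreover have "card Aset \<le> card ?S" by (rule card_mono[OF finS AS])
  ultimately have cS: "card ?S = 10 + card (?S - Aset)" using A_card by linarith
  have s58: "{5..8::nat} = {5,6,7,8}" by auto
  have ci: "condi = C1 m5 m6 m7 m8" unfolding condi_def m_def C1_def s58 by auto
  have cii: "condii k = C2 k m5 m6 m7 m8" for k unfolding condii_def C2_def by simp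
  show ?thesis
  proof
    show "num_orth_roots ?l = 10 \<longleftrightarrow> condi \<and> condii 1 \<and> condii 3"
    proof
      assume "num_orth_roots ?l = 10"
      then have "card (?S - Aset) = 0" using num cS by simp
      then have "?S - Aset = {}" using finS by simp
      then show "condi \<and> condii 1 \<and> condii 3" using wit[of m5 m6 m7 m8] ci cii by blast
    next
      assume "condi \<and> condii 1 \<and> condii 3"
      then have "?S - Aset = {}" using noextra ci cii by blast
      then have "card (?S - Aset) = 0" by (simp only: card.empty)
      then show "num_orth_roots ?l = 10" by (simp only: num cS add_0_right)
    qed
  next
    show "condi \<and> condii 1 \<and>
            card {(s6, s7, s8). s6 \<in> {-1,1::int} \<and> s7 \<in> {-1,1::int} \<and> s8 \<in> {-1,1::int} \<and>
                   3 * m5 = s6 * m6 + s7 * m7 + s8 * m8} = 1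
          \<longrightarrow> num_orth_roots ?l = 14"
    proof
      assume h: "condi \<and> condii 1 \<and>
            card {(s6, s7, s8). s6 \<in> {-1,1::int} \<and> s7 \<in> {-1,1::int} \<and> s8 \<in> {-1,1::int} \<and>
                   3 * m5 = s6 * m6 + s7 * m7 + s8 * m8} = 1"
      then have "card (?S - Aset) = 4" using part14[of m5 m6 m7 m8] ci cii by blast
      then show "num_orth_roots ?l = 14" using num cS by simp
    qed
  qed
qed

end
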